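(* Let $G$ be a Tanner graph representing a binary code $\mathcal{C}$. If either (i) $G$ is a tree, or (ii) between any two variable nodes of $G$ there is at least one path traversing only check nodes of degree two, then $G$ has either exactly one or zero irreducible lift-realizable nc-pseudocodewords.
   Context: A Tanner graph $G$ is a finite bipartite graph with variable nodes $v_1,\dots,v_n$ and check nodes; its code $\mathcal{C}$ consists of all $x\in\{0,1\}^n$ with every check node having an even number of neighbours $v_i$ with $x_i=1$. A degree-$\ell$ lift replaces each node by $\ell$ copies and each edge by a perfect matching between copy-sets; a lift-realizable pseudocodeword $p\in\mathbb{Z}_{\ge0}^n$ is obtained from a codeword of the code of a finite lift by letting $p_i$ be the number of copies of $v_i$ assigned 1. It is an nc-pseudocodeword if it is not a codeword of $\mathcal{C}$, and irreducible if it cannot be written as a sum of two or more nonzero codewords or pseudocodewords. *)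

theory Defs
  imports Main "HOL-Combinatorics.Permutations"
begin

definition tanner_graph :: "nat \<Rightarrow> 'c set \<Rightarrow> (nat \<times> 'c) set \<Rightarrow> bool" where
  "tanner_graph n C E \<longleftrightarrow> finite C \<and> E \<subseteq> {..<n} \<times> C"

definition is_codeword :: "nat \<Rightarrow> 'c set \<Rightarrow> (nat \<times> 'c) set \<Rightarrow> (nat \<Rightarrow> nat) \<Rightarrow> bool" where
  "is_codeword n C E x \<longleftrightarrow> (\<forall>i. x i \<le> 1) \<and> (\<forall>i. n \<le> i \<longrightarrow> x i = 0) \<and>
     (\<forall>c\<in>C. even (card {i. (i, c) \<in> E \<and> x i = 1}))"

text \<open>A degree-l lift: copies (i,a), (c,b) with a,b < l; the edge e=(i,c) is replaced
  by the perfect matching (i,a) -- (c, \<pi> e a) with \<pi> e a permutation of {..<l}.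
  A codeword of the lift is y (copy (i,a) assigned 1 iff y i a).\<close>
definition lift_codeword ::
  "'c set \<Rightarrow> (nat \<times> 'c) set \<Rightarrow> nat \<Rightarrow> (nat \<times> 'c \<Rightarrow> nat \<Rightarrow> nat) \<Rightarrow> (nat \<Rightarrow> nat \<Rightarrow> bool) \<Rightarrow> bool" where
  "lift_codeword C E l \<pi> y \<longleftrightarrow>
     (\<forall>c\<in>C. \<forall>b<l. even (card {(i, a). (i, c) \<in> E \<and> a < l \<and> \<pi> (i, c) a = b \<and> y i a}))"

definition lift_realizable :: "nat \<Rightarrow> 'c set \<Rightarrow> (nat \<times> 'c) set \<Rightarrow> (nat \<Rightarrow> nat) \<Rightarrow> bool" where
  "lift_realizable n C E p \<longleftrightarrow>
     (\<exists>l \<pi> y. l \<ge> 1 \<and> (\<forall>e\<in>E. \<pi> e permutes {..<l}) \<and> lift_codeword C E l \<pi> y \<and>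
        (\<forall>i. p i = (if i < n then card {a. a < l \<and> y i a} else 0)))"

definition nc_pseudocodeword :: "nat \<Rightarrow> 'c set \<Rightarrow> (nat \<times> 'c) set \<Rightarrow> (nat \<Rightarrow> nat) \<Rightarrow> bool" where
  "nc_pseudocodeword n C E p \<longleftrightarrow> lift_realizable n C E p \<and> \<not> is_codeword n C E p"

text \<open>Irreducible: not a sum of two or more nonzero codewords or lift-realizable
  pseudocodewords (codewords are themselves lift-realizable, with l = 1).\<close>
definition irreducible_pcw :: "nat \<Rightarrow> 'c set \<Rightarrow> (nat \<times> 'c) set \<Rightarrow> (nat \<Rightarrow> nat) \<Rightarrow> bool" where
  "irreducible_pcw n C E p \<longleftrightarrow>
     \<not> (\<exists>qs. length qs \<ge> 2 \<and>
            (\<forall>q\<in>set qs. q \<noteq> (\<lambda>_. 0) \<and> (is_codeword n C E q \<or> lift_realizable n C E q)) \<and>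
            p = (\<lambda>i. \<Sum>q\<leftarrow>qs. q i))"

definition tg_vertices :: "nat \<Rightarrow> 'c set \<Rightarrow> (nat + 'c) set" where
  "tg_vertices n C = Inl ` {..<n} \<union> Inr ` C"

definition tg_adj :: "(nat \<times> 'c) set \<Rightarrow> nat + 'c \<Rightarrow> nat + 'c \<Rightarrow> bool" where
  "tg_adj E u v \<longleftrightarrow> (\<exists>i c. (i, c) \<in> E \<and> ((u = Inl i \<and> v = Inr c) \<or> (u = Inr c \<and> v = Inl i)))"

definition tg_path :: "(nat \<times> 'c) set \<Rightarrow> (nat + 'c) list \<Rightarrow> bool" where
  "tg_path E vs \<longleftrightarrow> vs \<noteq> [] \<and> distinct vs \<and> (\<forall>k. Suc k < length vs \<longrightarrow> tg_adj E (vs ! k) (vs ! Suc k))"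

definition tg_cycle :: "(nat \<times> 'c) set \<Rightarrow> (nat + 'c) list \<Rightarrow> bool" where
  "tg_cycle E vs \<longleftrightarrow> length vs \<ge> 3 \<and> tg_path E vs \<and> tg_adj E (last vs) (hd vs)"

definition tg_is_tree :: "nat \<Rightarrow> 'c set \<Rightarrow> (nat \<times> 'c) set \<Rightarrow> bool" where
  "tg_is_tree n C E \<longleftrightarrow> tg_vertices n C \<noteq> {} \<and>
     (\<forall>u\<in>tg_vertices n C. \<forall>v\<in>tg_vertices n C. \<exists>vs. tg_path E vs \<and> hd vs = u \<and> last vs = v) \<and>
     \<not> (\<exists>vs. tg_cycle E vs)"

definition check_degree :: "(nat \<times> 'c) set \<Rightarrow> 'c \<Rightarrow> nat" where
  "check_degree E c = card {i. (i, c) \<in> E}"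

definition deg2_check_connected :: "nat \<Rightarrow> (nat \<times> 'c) set \<Rightarrow> bool" where
  "deg2_check_connected n E \<longleftrightarrow>
     (\<forall>i<n. \<forall>j<n. i \<noteq> j \<longrightarrow> (\<exists>vs. tg_path E vs \<and> hd vs = Inl i \<and> last vs = Inl j \<and>
        (\<forall>c. Inr c \<in> set vs \<longrightarrow> check_degree E c = 2)))"

end

theory Submission
  imports Defs
begin

lemma finite_E: "tanner_graph n C E \<Longrightarrow> finite E"
  unfolding tanner_graph_def
  by (meson finite_SigmaI finite_lessThan finite_subset)

lemma other_in_check:
  assumes fin: "finite E" and perm: "\<forall>e\<in>E. \<pi> e permutes {..<l}"
    and lc: "lift_codeword C E l \<pi> y" and c: "c \<in> C" and e: "(i, c) \<in> E"
    and a: "a < l" and y: "y i a"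
  shows "\<exists>j a'. j \<noteq> i \<and> (j, c) \<in> E \<and> a' < l \<and> \<pi> (j, c) a' = \<pi> (i, c) a \<and> y j a'"
proof -
  define b where "b = \<pi> (i, c) a"
  have pi: "\<pi> (i, c) permutes {..<l}" using perm e by blast
  have bl: "b < l" using permutes_in_image[OF pi] a b_def by simp
  define S where "S = {(i', a'). (i', c) \<in> E \<and> a' < l \<and> \<pi> (i', c) a' = b \<and> y i' a'}"
  have ev: "even (card S)" using lc c bl unfolding lift_codeword_def S_def by blast
  have fS: "finite S"
    by (rule finite_subset[of _ "fst ` E \<times> {..<l}"]) (force simp: S_def intro: fin)+
  have mem: "(i, a) \<in> S" using e a y b_def S_def by simp
  have "S \<noteq> {(i, a)}" using ev by auto
  then obtain x where x: "x \<in> S" "x \<noteq> (i, a)" using mem by blast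
  obtain j a' where ja: "(j, a') \<in> S" "(j, a') \<noteq> (i, a)" using x by (cases x) auto
  have "j \<noteq> i"
  proof
    assume "j = i"
    then have "\<pi> (i, c) a' = \<pi> (i, c) a" using ja(1) S_def b_def by simp
    then have "a' = a" using permutes_inj[OF pi] by (simp add: inj_eq)
    then show False using ja(2) \<open>j = i\<close> by simp
  qed
  then show ?thesis using ja(1) S_def b_def by auto
qed

lemma path_from_rtrancl:
  assumes "(u, v) \<in> {(x, y). tg_adj F x y}\<^sup>*"
  shows "\<exists>vs. tg_path F vs \<and> hd vs = u \<and> last vs = v"
  using assms
proof (induction rule: converse_rtrancl_induct)
  case base
  then show ?case by (intro exI[of _ "[v]"]) (simp add: tg_path_def)
next
  case (step y z)
  then obtain vs where vs: "tg_path F vs" "hd vs = z" "last vs = v" by blast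
  show ?case
  proof (cases "y \<in> set vs")
    case True
    then obtain as bs where vsd: "vs = as @ y # bs" by (meson split_list)
    have "tg_path F (y # bs)"
      unfolding tg_path_def
    proof (intro conjI allI impI)
      show "distinct (y # bs)" using vs(1) vsd unfolding tg_path_def by simp
      fix k assume k: "Suc k < length (y # bs)"
      have "Suc (length as + k) < length vs" using k vsd by simp
      then have "tg_adj F (vs ! (length as + k)) (vs ! Suc (length as + k))"
        using vs(1) unfolding tg_path_def by blast
      moreover have "vs ! (length as + k) = (y # bs) ! k" using vsd
        by (simp add: nth_append_length_plus)
      moreover have "vs ! Suc (length as + k) = (y # bs) ! Suc k" using vsd
        by (metis add_Suc_right nth_append_length_plus)
      ultimately show "tg_adj F ((y # bs) ! k) ((y # bs) ! Suc k)" by simp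
    qed simp
    moreover have "last (y # bs) = v" using vs(3) vsd by simp
    ultimately show ?thesis by (intro exI[of _ "y # bs"]) simp
  next
    case False
    have ne: "vs \<noteq> []" using vs(1) tg_path_def by blast
    have "tg_path F (y # vs)"
      unfolding tg_path_def
    proof (intro conjI allI impI)
      show "distinct (y # vs)" using vs(1) False unfolding tg_path_def by simp
      fix k assume k: "Suc k < length (y # vs)"
      show "tg_adj F ((y # vs) ! k) ((y # vs) ! Suc k)"
      proof (cases k)
        case 0
        then show ?thesis using step(1) vs(2) ne by (simp add: hd_conv_nth)
      next
        case (Suc m)
        then show ?thesis using vs(1) k unfolding tg_path_def by simp
      qed
    qed simp
    then show ?thesis using vs ne by (intro exI[of _ "y # vs"]) simp
  qed
qed

lemma tg_adj_mono: "F \<subseteq> E \<Longrightarrow> tg_adj F u v \<Longrightarrow> tg_adj E u v"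
  unfolding tg_adj_def by blast

lemma tg_adj_sym: "tg_adj F u v \<Longrightarrow> tg_adj F v u"
  unfolding tg_adj_def by blast

lemma not_connected:
  assumes FE: "F \<subseteq> E" and nocyc: "\<not> (\<exists>vs. tg_cycle E vs)" and e: "(i, c) \<in> E"
    and nF: "(i, c) \<notin> F"
  shows "(Inr c, Inl i) \<notin> {(x, y). tg_adj F x y}\<^sup>*"
proof
  assume "(Inr c, Inl i) \<in> {(x, y). tg_adj F x y}\<^sup>*"
  then obtain vs where vs: "tg_path F vs" "hd vs = Inr c" "last vs = Inl i"
    using path_from_rtrancl by blast
  have ne: "vs \<noteq> []" using vs(1) tg_path_def by blast
  have pE: "tg_path E vs" using vs(1) tg_adj_mono[OF FE] unfolding tg_path_def by blast
  have len2: "length vs \<ge> 2"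
  proof (rule ccontr)
    assume "\<not> length vs \<ge> 2"
    then have "length vs = 1" using ne by (metis One_nat_def length_0_conv less_2_cases not_le)
    then have "hd vs = last vs" using ne by (simp add: hd_conv_nth last_conv_nth)
    then show False using vs by simp
  qed
  show False
  proof (cases "length vs = 2")
    case True
    then obtain x1 x2 where "vs = [x1, x2]"
      by (metis (no_types, lifting) One_nat_def Suc_1 length_0_conv length_Suc_conv)
    then have "tg_adj F (Inr c) (Inl i)" using vs unfolding tg_path_def by auto
    then show False using nF unfolding tg_adj_def by auto
  next
    case False
    then have "length vs \<ge> 3" using len2 by simp
    moreover have "tg_adj E (last vs) (hd vs)" using vs e unfolding tg_adj_def by auto
    ultimately have "tg_cycle E vs" using pE unfolding tg_cycle_def by simp
    then show False using nocyc by blast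
  qed
qed


lemma gauge:
  assumes fin: "finite F" and FE: "F \<subseteq> E" and perm: "\<forall>e\<in>E. \<pi> e permutes {..<l}"
    and nocyc: "\<not> (\<exists>vs. tg_cycle E vs)"
  shows "\<exists>\<tau>. (\<forall>v. \<tau> v permutes {..<l}) \<and> (\<forall>(i, c)\<in>F. \<tau> (Inr c) = \<pi> (i, c) \<circ> \<tau> (Inl i))"
  using fin FE
proof (induction F rule: finite_induct)
  case empty
  then show ?case by (intro exI[of _ "\<lambda>_. id"]) (simp add: permutes_def)
next
  case (insert e F)
  obtain i c where e: "e = (i, c)" by (cases e)
  have "F \<subseteq> E" using insert.prems by simp
  then obtain \<tau> where tau: "\<forall>v. \<tau> v permutes {..<l}"
    "\<forall>(i, c)\<in>F. \<tau> (Inr c) = \<pi> (i, c) \<circ> \<tau> (Inl i)" using insert.IH by blast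
  have eE: "(i, c) \<in> E" using insert e by auto
  have pe: "\<pi> (i, c) permutes {..<l}" using perm eE by blast
  define R where "R = {(x, y). tg_adj F x y}"
  define K where "K = {w. (Inr c, w) \<in> R\<^sup>*}"
  define \<rho> where "\<rho> = inv (\<tau> (Inr c)) \<circ> \<pi> (i, c) \<circ> \<tau> (Inl i)"
  define \<tau>' where "\<tau>' = (\<lambda>w. if w \<in> K then \<tau> w \<circ> \<rho> else \<tau> w)"
  have rho: "\<rho> permutes {..<l}"
    unfolding \<rho>_def using tau(1) pe
    by (meson permutes_compose permutes_inv)
  have p1: "\<forall>v. \<tau>' v permutes {..<l}"
    unfolding \<tau>'_def using tau(1) rho by (simp add: permutes_compose)
  have cK: "Inr c \<in> K" unfolding K_def by simp
  have iK: "Inl i \<notin> K"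
    using not_connected[of F E i c] insert e eE nocyc unfolding K_def R_def by auto
  have newe: "\<tau>' (Inr c) = \<pi> (i, c) \<circ> \<tau>' (Inl i)"
  proof -
    have "\<tau>' (Inr c) = \<tau> (Inr c) \<circ> inv (\<tau> (Inr c)) \<circ> (\<pi> (i, c) \<circ> \<tau> (Inl i))"
      using cK unfolding \<tau>'_def \<rho>_def by (simp add: o_assoc)
    also have "\<dots> = \<pi> (i, c) \<circ> \<tau> (Inl i)"
      using permutes_inv_o(1)[OF tau(1)[rule_format, of "Inr c"]] by simp
    finally show ?thesis using iK unfolding \<tau>'_def by simp
  qed
  have olde: "\<tau>' (Inr c') = \<pi> (i', c') \<circ> \<tau>' (Inl i')" if "(i', c') \<in> F" for i' c'
  proof -
    have adj: "(Inl i', Inr c') \<in> R" "(Inr c', Inl i') \<in> R"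
      using that unfolding R_def tg_adj_def by auto
    have "Inl i' \<in> K \<longleftrightarrow> Inr c' \<in> K"
      unfolding K_def using adj by (auto intro: rtrancl.rtrancl_into_rtrancl)
    moreover have "\<tau> (Inr c') = \<pi> (i', c') \<circ> \<tau> (Inl i')" using tau(2) that by auto
    ultimately show ?thesis unfolding \<tau>'_def by (simp add: o_assoc)
  qed
  show ?case
    by (intro exI[of _ \<tau>']) (use p1 newe olde e in auto)
qed

lemma filter_sum:
  "(\<Sum>q\<leftarrow>filter (\<lambda>q. q \<noteq> (\<lambda>_. 0)) xs. q i) = (\<Sum>q\<leftarrow>xs. (q i :: nat))"
  by (induction xs) auto

lemma tree_sum:
  assumes tan: "tanner_graph n C E" and nocyc: "\<not> (\<exists>vs. tg_cycle E vs)"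
    and lr: "lift_realizable n C E p"
  shows "\<exists>qs. (\<forall>q\<in>set qs. q \<noteq> (\<lambda>_. 0) \<and> is_codeword n C E q) \<and> p = (\<lambda>i. \<Sum>q\<leftarrow>qs. q i)"
proof -
  have fin: "finite E" using finite_E[OF tan] .
  have Esub: "E \<subseteq> {..<n} \<times> C" using tan unfolding tanner_graph_def by simp
  obtain l \<pi> y where l: "l \<ge> 1" and perm: "\<forall>e\<in>E. \<pi> e permutes {..<l}"
    and lc: "lift_codeword C E l \<pi> y"
    and pdef: "\<forall>i. p i = (if i < n then card {a. a < l \<and> y i a} else 0)"
    using lr unfolding lift_realizable_def by blast
  obtain \<tau> where tau: "\<forall>v. \<tau> v permutes {..<l}"
    "\<forall>(i, c)\<in>E. \<tau> (Inr c) = \<pi> (i, c) \<circ> \<tau> (Inl i)"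
    using gauge[OF fin order_refl perm nocyc] by blast
  define x where "x = (\<lambda>a i. if i < n \<and> y i (\<tau> (Inl i) a) then 1 else (0::nat))"
  have cw: "is_codeword n C E (x a)" if a: "a < l" for a
    unfolding is_codeword_def
  proof (intro conjI allI impI ballI)
    fix i show "x a i \<le> 1" unfolding x_def by simp
  next
    fix i assume "n \<le> i" then show "x a i = 0" unfolding x_def by simp
  next
    fix c assume c: "c \<in> C"
    define b where "b = \<tau> (Inr c) a"
    have bl: "b < l" using permutes_in_image[OF tau(1)[rule_format, of "Inr c"]] a b_def by simp
    define S where "S = {(i', a'). (i', c) \<in> E \<and> a' < l \<and> \<pi> (i', c) a' = b \<and> y i' a'}"
    have ev: "even (card S)" using lc c bl unfolding lift_codeword_def S_def by blast
    define T where "T = {i. (i, c) \<in> E \<and> x a i = 1}"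
    have ST: "S = (\<lambda>i. (i, \<tau> (Inl i) a)) ` T"
    proof (intro equalityI subsetI)
      fix z assume z: "z \<in> S"
      obtain i' a' where z': "z = (i', a')" by (cases z)
      have e': "(i', c) \<in> E" and a': "a' < l" "\<pi> (i', c) a' = b" "y i' a'"
        using z z' S_def by auto
      have "b = \<pi> (i', c) (\<tau> (Inl i') a)" using tau(2) e' b_def by fastforce
      then have "a' = \<tau> (Inl i') a"
        using a'(2) permutes_inj[of "\<pi> (i', c)" "{..<l}"] perm e' by (simp add: inj_eq)
      moreover have "i' < n" using e' Esub by auto
      ultimately show "z \<in> (\<lambda>i. (i, \<tau> (Inl i) a)) ` T"
        using z' e' a' unfolding T_def x_def by auto
    next
      fix z assume "z \<in> (\<lambda>i. (i, \<tau> (Inl i) a)) ` T"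
      then obtain i where i: "i \<in> T" "z = (i, \<tau> (Inl i) a)" by blast
      have e': "(i, c) \<in> E" and yi: "y i (\<tau> (Inl i) a)" using i(1) unfolding T_def x_def
        by (auto split: if_splits)
      have "\<tau> (Inl i) a < l" using permutes_in_image[OF tau(1)[rule_format, of "Inl i"]] a by simp
      moreover have "\<pi> (i, c) (\<tau> (Inl i) a) = b" using tau(2) e' b_def by fastforce
      ultimately show "z \<in> S" using i(2) e' yi S_def by simp
    qed
    have "card S = card T" unfolding ST by (rule card_image) (auto simp: inj_on_def)
    then show "even (card {i. (i, c) \<in> E \<and> x a i = 1})" using ev T_def by simp
  qed
  have psum: "p i = (\<Sum>a<l. x a i)" for i
  proof (cases "i < n")
    case True
    have "(\<Sum>a<l. x a i) = card ({..<l} \<inter> {a. y i (\<tau> (Inl i) a)})"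
      unfolding x_def using True by (simp add: sum.If_cases Int_def)
    also have "\<dots> = card (\<tau> (Inl i) ` ({..<l} \<inter> {a. y i (\<tau> (Inl i) a)}))"
      using permutes_inj[OF tau(1)[rule_format, of "Inl i"]]
      by (simp add: card_image inj_on_subset)
    also have "\<tau> (Inl i) ` ({..<l} \<inter> {a. y i (\<tau> (Inl i) a)}) = {a. a < l \<and> y i a}"
    proof -
      have pt: "\<tau> (Inl i) permutes {..<l}" using tau(1) by blast
      show ?thesis
      proof (intro equalityI subsetI)
        fix z assume "z \<in> \<tau> (Inl i) ` ({..<l} \<inter> {a. y i (\<tau> (Inl i) a)})"
        then show "z \<in> {a. a < l \<and> y i a}" using permutes_in_image[OF pt] by auto
      next
        fix z assume z: "z \<in> {a. a < l \<and> y i a}"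
        have "inv (\<tau> (Inl i)) z < l" using z permutes_in_image[OF permutes_inv[OF pt]] by simp
        moreover have "\<tau> (Inl i) (inv (\<tau> (Inl i)) z) = z" using permutes_inverses(1)[OF pt] by simp
        ultimately show "z \<in> \<tau> (Inl i) ` ({..<l} \<inter> {a. y i (\<tau> (Inl i) a)})"
          using z by (metis (mono_tags, lifting) Int_Collect image_eqI lessThan_iff mem_Collect_eq)
      qed
    qed
    finally show ?thesis using pdef True by simp
  next
    case False
    then show ?thesis using pdef unfolding x_def by simp
  qed
  define qs where "qs = filter (\<lambda>q. q \<noteq> (\<lambda>_. 0)) (map x [0..<l])"
  have "\<forall>q\<in>set qs. q \<noteq> (\<lambda>_. 0) \<and> is_codeword n C E q"
    unfolding qs_def using cw by auto
  moreover have "p = (\<lambda>i. \<Sum>q\<leftarrow>qs. q i)"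
  proof
    fix i
    have "(\<Sum>q\<leftarrow>qs. q i) = (\<Sum>q\<leftarrow>map x [0..<l]. q i)" unfolding qs_def by (rule filter_sum)
    also have "\<dots> = (\<Sum>a\<leftarrow>[0..<l]. x a i)" by (simp add: o_def)
    also have "\<dots> = (\<Sum>a<l. x a i)" by (simp add: sum_list_distinct_conv_sum_set atLeast0LessThan)
    finally show "p i = (\<Sum>q\<leftarrow>qs. q i)" using psum by simp
  qed
  ultimately show ?thesis by blast
qed


lemma deg2_le:
  assumes fin: "finite E" and perm: "\<forall>e\<in>E. \<pi> e permutes {..<l}"
    and lc: "lift_codeword C E l \<pi> y" and c: "c \<in> C"
    and d2: "card {i. (i, c) \<in> E} = 2" and ei: "(i, c) \<in> E" and ej: "(j, c) \<in> E"
  shows "card {a. a < l \<and> y i a} \<le> card {a. a < l \<and> y j a}"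
proof (cases "i = j")
  case True then show ?thesis by simp
next
  case False
  have finN: "finite {i. (i, c) \<in> E}"
    using fin by (rule finite_subset[rotated, OF finite_imageI[of E fst]]) force
  have N: "{i. (i, c) \<in> E} = {i, j}"
  proof (rule card_subset_eq[symmetric])
    show "finite {i. (i, c) \<in> E}" by (rule finN)
    show "{i, j} \<subseteq> {i. (i, c) \<in> E}" using ei ej by simp
    show "card {i, j} = card {i. (i, c) \<in> E}" using d2 False by simp
  qed
  have pi: "\<pi> (i, c) permutes {..<l}" and pj: "\<pi> (j, c) permutes {..<l}" using perm ei ej by auto
  define f where "f = (\<lambda>a. inv (\<pi> (j, c)) (\<pi> (i, c) a))"
  have "inj_on f {a. a < l \<and> y i a}"
    unfolding f_def inj_on_def
    using permutes_inj[OF pi] permutes_inj[OF permutes_inv[OF pj]] by (simp add: inj_eq)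
  moreover have "f ` {a. a < l \<and> y i a} \<subseteq> {a. a < l \<and> y j a}"
  proof
    fix z assume "z \<in> f ` {a. a < l \<and> y i a}"
    then obtain a where a: "a < l" "y i a" "z = f a" by blast
    obtain j' a' where ja: "j' \<noteq> i" "(j', c) \<in> E" "a' < l" "\<pi> (j', c) a' = \<pi> (i, c) a" "y j' a'"
      using other_in_check[OF fin perm lc c ei a(1) a(2)] by blast
    have "j' = j" using ja(1,2) N by auto
    have "a' = inv (\<pi> (j, c)) (\<pi> (j, c) a')" using permutes_inverses(2)[OF pj] by simp
    also have "\<dots> = z" using ja(4) a(3) \<open>j' = j\<close> unfolding f_def by simp
    finally have "a' = z" .
    then show "z \<in> {a. a < l \<and> y j a}" using ja \<open>j' = j\<close> by simp
  qed
  ultimately show ?thesis by (intro card_inj_on_le) auto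
qed

lemma deg1_zero:
  assumes fin: "finite E" and perm: "\<forall>e\<in>E. \<pi> e permutes {..<l}"
    and lc: "lift_codeword C E l \<pi> y" and c: "c \<in> C"
    and d1: "card {i. (i, c) \<in> E} = 1" and ei: "(i, c) \<in> E"
  shows "{a. a < l \<and> y i a} = {}"
proof (rule ccontr)
  assume "{a. a < l \<and> y i a} \<noteq> {}"
  then obtain a where a: "a < l" "y i a" by blast
  obtain j' a' where ja: "j' \<noteq> i" "(j', c) \<in> E"
    using other_in_check[OF fin perm lc c ei a] by blast
  obtain k where "{i. (i, c) \<in> E} = {k}" using d1 card_1_singletonE by blast
  then have "\<forall>x. (x, c) \<in> E \<longleftrightarrow> x = k" by (simp add: set_eq_iff)
  then have "j' = k" "i = k" using ja ei by auto
  then show False using ja(1) by simp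
qed

lemma const_lemma:
  assumes tan: "tanner_graph n C E" and dc: "deg2_check_connected n E"
    and lr: "lift_realizable n C E p" and i: "i < n" and j: "j < n"
  shows "p i = p j"
proof -
  have fin: "finite E" using finite_E[OF tan] .
  have Esub: "E \<subseteq> {..<n} \<times> C" using tan unfolding tanner_graph_def by simp
  obtain l \<pi> y where perm: "\<forall>e\<in>E. \<pi> e permutes {..<l}"
    and lc: "lift_codeword C E l \<pi> y"
    and pdef: "\<forall>i. p i = (if i < n then card {a. a < l \<and> y i a} else 0)"
    using lr unfolding lift_realizable_def by blast
  have eq2: "p i' = p j'" if "check_degree E c = 2" "(i', c) \<in> E" "(j', c) \<in> E" for c i' j'
  proof -
    have c: "c \<in> C" using that(2) Esub by auto
    have d: "card {i. (i, c) \<in> E} = 2" using that(1) unfolding check_degree_def .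
    have "i' < n" "j' < n" using that Esub by auto
    then show ?thesis using pdef deg2_le[OF fin perm lc c d that(2,3)]
        deg2_le[OF fin perm lc c d that(3,2)] by simp
  qed
  show ?thesis
  proof (cases "i = j")
    case True then show ?thesis by simp
  next
    case False
    then obtain vs where vs: "tg_path E vs" "hd vs = Inl i" "last vs = Inl j"
      "\<forall>c. Inr c \<in> set vs \<longrightarrow> check_degree E c = 2"
      using dc i j False unfolding deg2_check_connected_def by blast
    define f where "f = (\<lambda>v. case v of Inl i \<Rightarrow> p i | Inr c \<Rightarrow> p (SOME i. (i, c) \<in> E))"
    have ne: "vs \<noteq> []" using vs(1) tg_path_def by blast
    have step: "f (vs ! k) = f (vs ! Suc k)" if k: "Suc k < length vs" for k
    proof -
      have "tg_adj E (vs ! k) (vs ! Suc k)" using vs(1) k unfolding tg_path_def by blast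
      then obtain i' c where ic: "(i', c) \<in> E"
        "(vs ! k = Inl i' \<and> vs ! Suc k = Inr c) \<or> (vs ! k = Inr c \<and> vs ! Suc k = Inl i')"
        unfolding tg_adj_def by blast
      have m1: "vs ! Suc k \<in> set vs" using k by (rule nth_mem)
      have m2: "vs ! k \<in> set vs" using k by (intro nth_mem) simp
      have "Inr c \<in> set vs" using ic(2) m1 m2 by (elim disjE) simp_all
      then have "check_degree E c = 2" using vs(4) by blast
      moreover have "(SOME i. (i, c) \<in> E, c) \<in> E" using ic(1) by (rule someI)
      ultimately have "p (SOME i. (i, c) \<in> E) = p i'" by (rule eq2[OF _ _ ic(1)])
      then have "f (Inr c) = f (Inl i')" unfolding f_def by simp
      then show ?thesis using ic(2) by (elim disjE) simp_all
    qed
    have fk: "f (vs ! k) = f (vs ! 0)" if "k < length vs" for k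
      using that
    proof (induction k)
      case 0 then show ?case by simp
    next
      case (Suc k) then show ?case using step[of k] by simp
    qed
    have "f (vs ! (length vs - 1)) = f (vs ! 0)" using ne by (intro fk) simp
    then have "f (last vs) = f (hd vs)" using ne by (simp add: hd_conv_nth last_conv_nth)
    then show ?thesis using vs(2,3) unfolding f_def by simp
  qed
qed

lemma parity_lemma:
  assumes tan: "tanner_graph n C E" and lr: "lift_realizable n C E p" and c: "c \<in> C"
    and k: "\<forall>i<n. p i = k"
  shows "even (card {i. (i, c) \<in> E} * k)"
proof -
  have fin: "finite E" using finite_E[OF tan] .
  have Esub: "E \<subseteq> {..<n} \<times> C" using tan unfolding tanner_graph_def by simp
  obtain l \<pi> y where perm: "\<forall>e\<in>E. \<pi> e permutes {..<l}"
    and lc: "lift_codeword C E l \<pi> y"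
    and pdef: "\<forall>i. p i = (if i < n then card {a. a < l \<and> y i a} else 0)"
    using lr unfolding lift_realizable_def by blast
  define N where "N = {i. (i, c) \<in> E}"
  have finN: "finite N" unfolding N_def
    using fin by (rule finite_subset[rotated, OF finite_imageI[of E fst]]) force
  define T where "T = Sigma N (\<lambda>i. {a. a < l \<and> y i a})"
  define S where "S = (\<lambda>b. {(i, a). (i, c) \<in> E \<and> a < l \<and> \<pi> (i, c) a = b \<and> y i a})"
  have "card T = (\<Sum>i\<in>N. card {a. a < l \<and> y i a})"
    unfolding T_def using finN by (intro card_SigmaI) auto
  also have "\<dots> = (\<Sum>i\<in>N. k)"
  proof (rule sum.cong)
    fix i assume "i \<in> N"
    then have "i < n" using Esub N_def by auto
    then show "card {a. a < l \<and> y i a} = k" using pdef k by metis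
  qed simp
  finally have cT: "card T = card N * k" by simp
  have TU: "T = (\<Union>b<l. S b)"
  proof (intro equalityI subsetI)
    fix z assume z: "z \<in> T"
    then obtain i a where ia: "z = (i, a)" "(i, c) \<in> E" "a < l" "y i a"
      unfolding T_def N_def by auto
    have "\<pi> (i, c) a < l" using permutes_in_image[of "\<pi> (i, c)"] perm ia by auto
    then show "z \<in> (\<Union>b<l. S b)" using ia unfolding S_def by auto
  next
    fix z assume "z \<in> (\<Union>b<l. S b)"
    then show "z \<in> T" unfolding S_def T_def N_def by auto
  qed
  have finS: "finite (S b)" for b
    by (rule finite_subset[of _ "fst ` E \<times> {..<l}"]) (force simp: S_def intro: fin)+
  have "card T = (\<Sum>b<l. card (S b))"
    unfolding TU apply (rule card_UN_disjoint) apply simp apply (simp add: finS)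
    unfolding S_def by blast
  moreover have "2 dvd (\<Sum>b<l. card (S b))"
    by (rule dvd_sum) (use lc c in \<open>auto simp: lift_codeword_def S_def\<close>)
  ultimately show ?thesis using cT N_def by simp
qed


lemma mod_aux2: "(x::nat) < d \<Longrightarrow> 2 \<le> d \<Longrightarrow> x + 1 < d \<Longrightarrow> ((1 + x) mod d = b) \<longleftrightarrow> (b < d \<and> x = (b + d - 1) mod d)"
  by (smt (verit, best) Nat.add_diff_assoc2 add.commute diff_add_inverse
    diff_is_0_eq' le_add_diff less_iff_succ_less_eq mod_add_right_eq
    mod_add_self2 mod_if nat_le_linear)

lemma mod_aux1: "(x::nat) + 1 = d \<Longrightarrow> 2 \<le> d \<Longrightarrow> ((1 + x) mod d = b) \<longleftrightarrow> (b < d \<and> x = (b + d - 1) mod d)"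
  by (metis add.commute add.right_neutral diff_add_inverse diff_diff_left
    dvd_imp_mod_0 dvd_minus_mod less_add_one mod_if mod_self
    trans_less_add2)

lemma mod_aux: "(x::nat) < d \<Longrightarrow> 2 \<le> d \<Longrightarrow> ((1 + x) mod d = b) \<longleftrightarrow> (b < d \<and> x = (b + d - 1) mod d)"
proof (cases "x + 1 = d")
  case True
  assume "x < d" "2 \<le> d" then show ?thesis using True mod_aux1 by simp
next
  case False
  assume "x < d" "2 \<le> d" then show ?thesis using False mod_aux2 by simp
qed

lemma mod_cancel_aux: "(a + s) mod d = (a' + s) mod d \<Longrightarrow> a mod d = (a'::nat) mod d"
  by (metis add_diff_cancel_right add_le_cancel_right linear mod_eq_dvd_iff_nat)

lemma shift_permutes:
  fixes s d l :: nat
  assumes s: "s < d" and dl: "d \<le> l"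
  shows "(\<lambda>a. if a < d then (a + s) mod d else a) permutes {..<l}"
proof -
  let ?f = "\<lambda>a. if a < d then (a + s) mod d else a"
  have d0: "d > 0" using s by simp
  have inj: "inj_on ?f {..<d}"
  proof (rule inj_onI)
    fix a a' assume a: "a \<in> {..<d}" "a' \<in> {..<d}" "?f a = ?f a'"
    then have "(a + s) mod d = (a' + s) mod d" by simp
    then have "a mod d = a' mod d" by (rule mod_cancel_aux)
    then show "a = a'" using a by simp
  qed
  have img: "?f ` {..<d} \<subseteq> {..<d}" using d0 by auto
  have "?f ` {..<d} = {..<d}" using endo_inj_surj[OF finite_lessThan img inj] .
  then have "bij_betw ?f {..<d} {..<d}" using inj by (simp add: bij_betw_def)
  then have "?f permutes {..<d}" by (rule bij_imp_permutes) simp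
  then show ?thesis by (rule permutes_subset) (use dl in auto)
qed

lemma bij_fiber:
  assumes bij: "bij_betw g N {..<(d::nat)}"
  shows "{i \<in> N. g i = m} = (if m < d then {inv_into N g m} else {})"
proof (cases "m < d")
  case True
  have h1: "inv_into N g m \<in> N"
    using bij_betw_inv_into[OF bij] True unfolding bij_betw_def by blast
  have h2: "g (inv_into N g m) = m" using bij_betw_inv_into_right[OF bij] True by simp
  have h3: "i = inv_into N g m" if "i \<in> N" "g i = m" for i
    using bij_betw_inv_into_left[OF bij that(1)] that(2) by simp
  have "{i \<in> N. g i = m} = {inv_into N g m}"
  proof (rule set_eqI)
    fix i show "i \<in> {i \<in> N. g i = m} \<longleftrightarrow> i \<in> {inv_into N g m}"
      using h1 h2 h3[of i] by blast
  qed
  then show ?thesis using True by simp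
next
  case False
  have "g i < d" if "i \<in> N" for i using bij that unfolding bij_betw_def by auto
  then have "{i \<in> N. g i = m} = {}" using False by force
  then show ?thesis using False by simp
qed

lemma two_realizable:
  assumes tan: "tanner_graph n C E" and nod1: "\<forall>c\<in>C. card {i. (i, c) \<in> E} \<noteq> 1"
  shows "lift_realizable n C E (\<lambda>i. if i < n then 2 else 0)"
proof -
  have Esub: "E \<subseteq> {..<n} \<times> C" using tan unfolding tanner_graph_def by simp
  define N where "N = (\<lambda>c. {i. (i, c) \<in> E})"
  have Nsub: "N c \<subseteq> {..<n}" for c using Esub N_def by auto
  have finN: "finite (N c)" for c using Nsub finite_subset by blast
  have cardN: "card (N c) \<le> n" for c using card_mono[OF finite_lessThan Nsub] by simp
  define g where "g = (\<lambda>c. SOME g. bij_betw g (N c) {..<card (N c)})"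
  have g: "bij_betw (g c) (N c) {..<card (N c)}" for c
  proof -
    have "\<exists>h. bij_betw h (N c) {..<card (N c)}"
      using ex_bij_betw_finite_nat[OF finN] by (simp add: atLeast0LessThan)
    then show ?thesis unfolding g_def by (rule someI_ex)
  qed
  define \<pi> where "\<pi> = (\<lambda>(i, c) a. if a < card (N c) then (a + g c i) mod card (N c) else a)"
  define l where "l = n + 2"
  define y where "y = (\<lambda>(i::nat) (a::nat). a < 2)"
  have perm: "\<forall>e\<in>E. \<pi> e permutes {..<l}"
  proof
    fix e assume e: "e \<in> E"
    obtain i c where ic: "e = (i, c)" by (cases e)
    have "i \<in> N c" using e ic N_def by simp
    then have "g c i < card (N c)" using g[of c] by (auto dest: bij_betwE)
    moreover have "card (N c) \<le> l" using cardN[of c] l_def by simp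
    ultimately show "\<pi> e permutes {..<l}" unfolding ic \<pi>_def by (simp add: shift_permutes)
  qed
  have lc: "lift_codeword C E l \<pi> y"
    unfolding lift_codeword_def
  proof (intro ballI allI impI)
    fix c b assume c: "c \<in> C" and b: "b < l"
    define d where "d = card (N c)"
    define S where "S = {(i, a). (i, c) \<in> E \<and> a < l \<and> \<pi> (i, c) a = b \<and> y i a}"
    show "even (card {(i, a). (i, c) \<in> E \<and> a < l \<and> \<pi> (i, c) a = b \<and> y i a})"
    proof (cases "d = 0")
      case True
      then have "N c = {}" using finN d_def by simp
      then have "S = {}" unfolding S_def N_def by auto
      then show ?thesis unfolding S_def[symmetric] by simp
    next
      case False
      then have d2: "d \<ge> 2" using nod1 c d_def N_def by fastforce
      have gd: "g c i < d" if "i \<in> N c" for i using g[of c] that d_def by (auto dest: bij_betwE)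
      have S_eq: "S = (\<lambda>i. (i, 0::nat)) ` {i \<in> N c. g c i = b}
                   \<union> (\<lambda>i. (i, 1::nat)) ` {i \<in> N c. (1 + g c i) mod d = b}"
      proof (intro equalityI subsetI)
        fix z assume "z \<in> S"
        then obtain i a where z: "z = (i, a)" "(i, c) \<in> E" "\<pi> (i, c) a = b" "a < 2"
          unfolding S_def y_def by auto
        have iN: "i \<in> N c" using z N_def by simp
        show "z \<in> (\<lambda>i. (i, 0::nat)) ` {i \<in> N c. g c i = b}
                   \<union> (\<lambda>i. (i, 1::nat)) ` {i \<in> N c. (1 + g c i) mod d = b}"
        proof (cases "a = 0")
          case True
          then have "g c i = b" using z gd[OF iN] d_def d2 unfolding \<pi>_def by simp
          then show ?thesis using True z iN by auto
        next
          case False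
          then have "a = 1" using z by simp
          then have "(1 + g c i) mod d = b" using z d_def d2 unfolding \<pi>_def by simp
          then show ?thesis using \<open>a = 1\<close> z iN by auto
        qed
      next
        fix z assume z: "z \<in> (\<lambda>i. (i, 0::nat)) ` {i \<in> N c. g c i = b}
                   \<union> (\<lambda>i. (i, 1::nat)) ` {i \<in> N c. (1 + g c i) mod d = b}"
        show "z \<in> S"
        proof (cases "z \<in> (\<lambda>i. (i, 0::nat)) ` {i \<in> N c. g c i = b}")
          case True
          then obtain i where i: "z = (i, 0)" "i \<in> N c" "g c i = b" by blast
          then show ?thesis using gd[OF i(2)] d_def d2 l_def unfolding S_def \<pi>_def y_def N_def by auto
        next
          case False
          then obtain i where i: "z = (i, 1)" "i \<in> N c" "(1 + g c i) mod d = b" using z by blast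
          then show ?thesis using d_def d2 l_def unfolding S_def \<pi>_def y_def N_def by auto
        qed
      qed
      have A0: "{i \<in> N c. g c i = b} = (if b < d then {inv_into (N c) (g c) b} else {})"
        using bij_fiber[OF g[of c]] d_def by simp
      have "{i \<in> N c. (1 + g c i) mod d = b} = {i \<in> N c. b < d \<and> g c i = (b + d - 1) mod d}"
      proof -
        have "((1 + g c i) mod d = b) \<longleftrightarrow> (b < d \<and> g c i = (b + d - 1) mod d)" if "i \<in> N c" for i
          using mod_aux[OF gd[OF that] d2] .
        then show ?thesis by auto
      qed
      also have "\<dots> = (if b < d then {i \<in> N c. g c i = (b + d - 1) mod d} else {})" by auto
      also have "\<dots> = (if b < d then {inv_into (N c) (g c) ((b + d - 1) mod d)} else {})"
        using bij_fiber[OF g[of c]] d_def d2 by simp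
      finally have A1: "{i \<in> N c. (1 + g c i) mod d = b} =
          (if b < d then {inv_into (N c) (g c) ((b + d - 1) mod d)} else {})" .
      have "card S = (if b < d then 2 else 0)"
        unfolding S_eq A0 A1 by simp
      then show ?thesis unfolding S_def[symmetric] by simp
    qed
  qed
  have "\<forall>i. (if i < n then 2 else 0) = (if i < n then card {a. a < l \<and> y i a} else 0)"
  proof
    fix i
    have "{a. a < l \<and> y i a} = {0, 1}" unfolding y_def l_def by auto
    then show "(if i < n then 2 else 0) = (if i < n then card {a. a < l \<and> y i a} else (0::nat))"
      by simp
  qed
  moreover have "l \<ge> 1" unfolding l_def by simp
  ultimately show ?thesis unfolding lift_realizable_def
    by (intro exI[of _ l] exI[of _ \<pi>] exI[of _ y]) (use perm lc in simp)
qed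


lemma zero_cw: "is_codeword n C E (\<lambda>_. 0)"
  unfolding is_codeword_def by simp

lemma sum_rep: "(\<lambda>i. \<Sum>q'\<leftarrow>replicate m q. q' i) = (\<lambda>i. m * (q i :: nat))"
  by (simp add: sum_list_replicate map_replicate)

lemma deg2_unique:
  assumes tan: "tanner_graph n C E" and dc: "deg2_check_connected n E"
    and nc: "nc_pseudocodeword n C E p" and irr: "irreducible_pcw n C E p"
  shows "p = (\<lambda>i. if i < n then 2 else 0)"
proof -
  have fin: "finite E" using finite_E[OF tan] .
  have Esub: "E \<subseteq> {..<n} \<times> C" using tan unfolding tanner_graph_def by simp
  have lr: "lift_realizable n C E p" and ncw: "\<not> is_codeword n C E p"
    using nc unfolding nc_pseudocodeword_def by auto
  obtain l \<pi> y where perm: "\<forall>e\<in>E. \<pi> e permutes {..<l}"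
    and lc: "lift_codeword C E l \<pi> y"
    and pdef: "\<forall>i. p i = (if i < n then card {a. a < l \<and> y i a} else 0)"
    using lr unfolding lift_realizable_def by blast
  have irrd: "\<not> (\<exists>qs. length qs \<ge> 2 \<and>
            (\<forall>q\<in>set qs. q \<noteq> (\<lambda>_. 0) \<and> (is_codeword n C E q \<or> lift_realizable n C E q)) \<and>
            p = (\<lambda>i. \<Sum>q\<leftarrow>qs. q i))"
    using irr unfolding irreducible_pcw_def .
  have "p \<noteq> (\<lambda>_. 0)" using ncw zero_cw by metis
  then obtain i0 where i0: "i0 < n" "p i0 \<noteq> 0"
    using pdef by (metis (full_types))
  define k where "k = p i0"
  have k0: "k \<noteq> 0" using i0 k_def by simp
  have pk: "\<forall>i<n. p i = k" using const_lemma[OF tan dc lr _ i0(1)] k_def by auto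
  have pform: "p = (\<lambda>i. if i < n then k else 0)"
  proof
    fix i show "p i = (if i < n then k else 0)" using pk pdef by auto
  qed
  show ?thesis
  proof (cases "odd k")
    case True
    define one where "one = (\<lambda>i. if i < n then 1 else (0::nat))"
    have evc: "even (card {i. (i, c) \<in> E})" if c: "c \<in> C" for c
      using parity_lemma[OF tan lr c pk] True by simp
    have "is_codeword n C E one"
      unfolding is_codeword_def
    proof (intro conjI allI impI ballI)
      fix c assume c: "c \<in> C"
      have "{i. (i, c) \<in> E \<and> one i = 1} = {i. (i, c) \<in> E}"
        using Esub unfolding one_def by auto
      then show "even (card {i. (i, c) \<in> E \<and> one i = 1})" using evc[OF c] by simp
    qed (auto simp: one_def)
    moreover have one_nz: "one \<noteq> (\<lambda>_. 0)"
    proof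
      assume "one = (\<lambda>_. 0)"
      then have "one i0 = 0" by simp
      then show False using i0 one_def by simp
    qed
    ultimately show ?thesis
    proof (cases "k = 1")
      case True
      then have "p = one" using pform one_def by auto
      then show ?thesis using ncw \<open>is_codeword n C E one\<close> by simp
    next
      case False
      then have "k \<ge> 2" using k0 by simp
      moreover have "p = (\<lambda>i. \<Sum>q'\<leftarrow>replicate k one. q' i)"
        unfolding sum_rep pform one_def by auto
      ultimately have "\<exists>qs. length qs \<ge> 2 \<and>
            (\<forall>q\<in>set qs. q \<noteq> (\<lambda>_. 0) \<and> (is_codeword n C E q \<or> lift_realizable n C E q)) \<and>
            p = (\<lambda>i. \<Sum>q\<leftarrow>qs. q i)"
        using one_nz \<open>is_codeword n C E one\<close>
        by (intro exI[of _ "replicate k one"] conjI) auto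
      then have False using irrd by blast
      then show ?thesis ..
    qed
  next
    case False
    define two where "two = (\<lambda>i. if i < n then 2 else (0::nat))"
    have nod1: "\<forall>c\<in>C. card {i. (i, c) \<in> E} \<noteq> 1"
    proof (intro ballI notI)
      fix c assume c: "c \<in> C" and d1: "card {i. (i, c) \<in> E} = 1"
      then obtain i where "{i. (i, c) \<in> E} = {i}" using card_1_singletonE by blast
      then have ei: "(i, c) \<in> E" by auto
      have "{a. a < l \<and> y i a} = {}" using deg1_zero[OF fin perm lc c d1 ei] .
      moreover have "i < n" using ei Esub by auto
      ultimately have "p i = 0" using pdef by simp
      then show False using pk \<open>i < n\<close> k0 by simp
    qed
    have tr: "lift_realizable n C E two" unfolding two_def by (rule two_realizable[OF tan nod1])
    show ?thesis
    proof (cases "k = 2")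
      case True
      show ?thesis by (subst pform, subst True) (rule refl)
    next
      case k2: False
      have "k \<ge> 4" using k0 k2 False by presburger
      then have "k div 2 \<ge> 2" by simp
      moreover have two_nz: "two \<noteq> (\<lambda>_. 0)"
      proof
        assume "two = (\<lambda>_. 0)"
        then have "two i0 = 0" by simp
        then show False using i0 two_def by simp
      qed
      moreover have "p = (\<lambda>i. \<Sum>q'\<leftarrow>replicate (k div 2) two. q' i)"
        unfolding sum_rep pform two_def using False by auto
      ultimately have "\<exists>qs. length qs \<ge> 2 \<and>
            (\<forall>q\<in>set qs. q \<noteq> (\<lambda>_. 0) \<and> (is_codeword n C E q \<or> lift_realizable n C E q)) \<and>
            p = (\<lambda>i. \<Sum>q\<leftarrow>qs. q i)"
        using tr by (intro exI[of _ "replicate (k div 2) two"] conjI) auto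
      then have False using irrd by blast
      then show ?thesis ..
    qed
  qed
qed

theorem claim2:
  fixes n :: nat and C :: "'c set" and E :: "(nat \<times> 'c) set"
  assumes "tanner_graph n C E"
    and "tg_is_tree n C E \<or> deg2_check_connected n E"
  shows "(\<exists>!p. nc_pseudocodeword n C E p \<and> irreducible_pcw n C E p) \<or>
         \<not> (\<exists>p. nc_pseudocodeword n C E p \<and> irreducible_pcw n C E p)"
  using assms(2)
proof
  assume tree: "tg_is_tree n C E"
  then have nocyc: "\<not> (\<exists>vs. tg_cycle E vs)" unfolding tg_is_tree_def by blast
  have "\<not> (nc_pseudocodeword n C E p \<and> irreducible_pcw n C E p)" for p
  proof
    assume h: "nc_pseudocodeword n C E p \<and> irreducible_pcw n C E p"
    then have lr: "lift_realizable n C E p" and ncw: "\<not> is_codeword n C E p"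
      and irr: "irreducible_pcw n C E p" unfolding nc_pseudocodeword_def by auto
    obtain qs where qs: "\<forall>q\<in>set qs. q \<noteq> (\<lambda>_. 0) \<and> is_codeword n C E q"
      "p = (\<lambda>i. \<Sum>q\<leftarrow>qs. q i)"
      using tree_sum[OF assms(1) nocyc lr] by blast
    show False
    proof (cases "length qs \<ge> 2")
      case True
      then show False using irr qs unfolding irreducible_pcw_def by blast
    next
      case False
      then have "qs = [] \<or> (\<exists>q. qs = [q])"
        by (cases qs) (auto simp: Suc_le_eq)
      then show False
      proof
        assume "qs = []"
        then have "p = (\<lambda>_. 0)" using qs(2) by simp
        then show False using ncw zero_cw[of n C E] by simp
      next
        assume "\<exists>q. qs = [q]"
        then obtain q where q: "qs = [q]" by blast
        then have "p = q" using qs(2) by auto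
        then show False using ncw qs(1) q by simp
      qed
    qed
  qed
  then show ?thesis by blast
next
  assume dc: "deg2_check_connected n E"
  show ?thesis
  proof (cases "\<exists>p. nc_pseudocodeword n C E p \<and> irreducible_pcw n C E p")
    case True
    then obtain p where p: "nc_pseudocodeword n C E p \<and> irreducible_pcw n C E p" by blast
    have "\<exists>!p. nc_pseudocodeword n C E p \<and> irreducible_pcw n C E p"
    proof (rule ex1I[of _ p])
      show "nc_pseudocodeword n C E p \<and> irreducible_pcw n C E p" by (rule p)
    next
      fix p' assume "nc_pseudocodeword n C E p' \<and> irreducible_pcw n C E p'"
      then show "p' = p" using deg2_unique[OF assms(1) dc] p by metis
    qed
    then show ?thesis ..
  next
    case False
    then show ?thesis ..
  qed
qed

end
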